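(* Let $\mathbf v\in\mathbb{R}^\infty$, and let $\mathbf w=\mathbb{F}^{\rm F}\mathbf v$ and $\mathbf x=\mathbb{L}^{\rm F}\mathbf v$, where $\mathbb{F}^{\rm F}=\left(\frac{x}{1-x},\frac{x^2}{1-x}\right)$ and $\mathbb{L}^{\rm F}=\left(\frac{2-x}{1-x},\frac{x^2}{1-x}\right)$. Let $D=(1,-x)$, $\mathbb{F}^{\rm S}=(1,x(1+x))$, $\mathbb{L}^{\rm S}=(1+2x,x(1+x))$ and $C(x)=\frac{1-\sqrt{1-4x}}{2x}$. Then: (a) $\left(\frac{2-xC(x)}{xC(x)},xC(x)\right)\mathbf w=D(\mathbb{F}^{\rm S})^{-1}D\,\mathbf x$; (b) $\left(\frac{2-xC(x)}{xC(x)-2x^2C(x)^2},xC(x)\right)\mathbf w=D(\mathbb{L}^{\rm S})^{-1}D\,\mathbf x$; (c) $\left(\frac{xC(x)}{2-xC(x)},xC(x)\right)\mathbf x=D(\mathbb{F}^{\rm S})^{-1}D\,\mathbf w$; (d) $\left(\frac{xC(x)}{(1-2xC(x))(2-xC(x))},xC(x)\right)\mathbf x=D(\mathbb{L}^{\rm S})^{-1}D\,\mathbf w$.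
   Context: $\mathbb{R}^\infty$ is the space of real column vectors $[v_0,v_1,\ldots]^T$, identified with generating functions $V(x)=\sum_n v_nx^n$. For a formal power series $f(x)$ with $f(0)=0$ and a series $g(x)$, $(g(x),f(x))$ denotes the operator/infinite lower triangular matrix whose $j$-th column has generating function $g(x)f(x)^j$; it sends $\mathbf u$ with generating function $U(x)$ to the sequence with generating function $g(x)U(f(x))$. In (a) and (b) the first component $g$ is a formal Laurent series with a pole of order one at $x=0$; the product $g(x)W(xC(x))$ is nevertheless a formal power series because the generating function $W$ of $\mathbf w$ has zero constant term, and $(g,f)\mathbf w$ denotes the sequence with that generating function. Products of such matrices obey $(g,f)(h,l)=(g\cdot h(f),l(f))$, and for Riordan matrices ($g(0)\ne0$, $f'(0)\neq0$) inverses are $(g,f)^{-1}=(1/g(\bar f),\bar f)$ with $\bar f$ the compositional inverse of $f$. *)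

theory Defs
  imports "HOL-Computational_Algebra.Formal_Power_Series" "HOL-Computational_Algebra.Formal_Laurent_Series"
begin

text \<open>Vectors in R^infinity are identified with their generating functions (real fps).
  The operator (g,f) sends U to g(x) U(f(x)).\<close>
definition riordan :: "real fps \<Rightarrow> real fps \<Rightarrow> real fps \<Rightarrow> real fps" where
  "riordan g f u = g * (u oo f)"

definition riordan_inv :: "real fps \<Rightarrow> real fps \<Rightarrow> real fps \<Rightarrow> real fps" where
  "riordan_inv g f y = (THE u. riordan g f u = y)"

definition Dop :: "real fps \<Rightarrow> real fps" where
  "Dop u = riordan 1 (- fps_X) u"

text \<open>sqrt(1-4x) as the power series square root with constant term 1.\<close>
definition sqrt14 :: "real fps" where
  "sqrt14 = fps_radical (\<lambda>_ _. 1) 2 (1 - 4 * fps_X)"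

text \<open>C(x) = (1 - sqrt(1-4x))/(2x); the numerator has zero constant term, so division
  by x is the shift.\<close>
definition Cat :: "real fps" where
  "Cat = fps_shift 1 ((1 - sqrt14) / 2)"

definition FF :: "real fps \<Rightarrow> real fps" where
  "FF u = riordan (fps_X / (1 - fps_X)) (fps_X ^ 2 / (1 - fps_X)) u"
definition LF :: "real fps \<Rightarrow> real fps" where
  "LF u = riordan ((2 - fps_X) / (1 - fps_X)) (fps_X ^ 2 / (1 - fps_X)) u"

definition FS_inv :: "real fps \<Rightarrow> real fps" where
  "FS_inv u = riordan_inv 1 (fps_X * (1 + fps_X)) u"
definition LS_inv :: "real fps \<Rightarrow> real fps" where
  "LS_inv u = riordan_inv (1 + 2 * fps_X) (fps_X * (1 + fps_X)) u"

end

theory Submission imports Defs begin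

lemma div_mult_cancel_fps: "(b::real fps)$0 \<noteq> 0 \<Longrightarrow> a / b * b = a"
  by (simp add: fps_divide_unit inverse_mult_eq_1 mult.assoc)

lemma sqrt14_sq: "sqrt14 ^ 2 = 1 - 4 * fps_X"
proof -
  have "(fps_radical (\<lambda>_ _. 1) (Suc 1) (1 - 4 * fps_X)) ^ Suc 1 = (1 - 4 * fps_X :: real fps)"
    by (rule power_radical[THEN iffD1]) auto
  then show ?thesis by (simp add: sqrt14_def numeral_2_eq_2)
qed

lemma sqrt14_0: "sqrt14 $ 0 = 1"
  by (simp add: sqrt14_def)

lemma shift_X: "(f::real fps) $ 0 = 0 \<Longrightarrow> fps_shift 1 f * fps_X = f"
proof (cases "f = 0")
  case False
  assume "f $ 0 = 0"
  hence "1 \<le> subdegree f" using False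
    by (metis One_nat_def Suc_le_eq neq0_conv subdegree_eq_0_iff)
  thus ?thesis by (rule fps_shift_times_fps_X)
qed simp

lemma xC_eq: "2 * (fps_X * Cat) = 1 - sqrt14"
proof -
  have "((1 - sqrt14) / 2) $ 0 = 0" by (simp add: sqrt14_0 fps_divide_unit)
  hence "fps_X * Cat = (1 - sqrt14) / 2"
    unfolding Cat_def by (subst mult.commute) (rule shift_X)
  moreover have "(1 - sqrt14) / 2 * 2 = 1 - sqrt14"
    by (rule div_mult_cancel_fps) simp
  ultimately show ?thesis by (simp add: mult.commute)
qed

lemma c_eq: "fps_X * Cat = fps_X + (fps_X * Cat)^2"
proof -
  define c where "c = fps_X * Cat"
  have "(2 * c)^2 = (1 - sqrt14)^2" using xC_eq c_def by simp
  also have "\<dots> = 1 - 2 * sqrt14 + (1 - 4 * fps_X)"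
    using sqrt14_sq by (simp add: power2_eq_square algebra_simps)
  also have "\<dots> = 2 * (2 * c) - 4 * fps_X" unfolding c_def xC_eq by (simp add: algebra_simps)
  finally have "4 * (c - fps_X - c^2) = 0" by (simp add: algebra_simps power2_eq_square)
  moreover have "(4::real fps) \<noteq> 0"
    by (metis fps_numeral_nth_0 fps_zero_nth zero_neq_numeral)
  ultimately have "c - fps_X - c^2 = 0" by (meson mult_eq_0_iff)
  thus ?thesis unfolding c_def[symmetric] by (simp add: algebra_simps)
qed

lemma comp_inj:
  assumes f0: "(f::real fps) $ 0 = 0" and f1: "f $ 1 \<noteq> 0" and e: "a oo f = b oo f"
  shows "a = b"
proof -
  have i0: "fps_inv f $ 0 = 0" by (simp add: fps_inv_def)
  have "a = a oo (f oo fps_inv f)" using fps_inv_right[OF f0 f1] by simp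
  also have "\<dots> = a oo f oo fps_inv f" by (rule fps_compose_assoc[OF i0 f0])
  also have "\<dots> = b oo f oo fps_inv f" using e by simp
  also have "\<dots> = b oo (f oo fps_inv f)" by (rule fps_compose_assoc[OF i0 f0, symmetric])
  also have "\<dots> = b" using fps_inv_right[OF f0 f1] by simp
  finally show ?thesis .
qed

lemma rinv:
  assumes g: "g \<noteq> 0" and f0: "(f::real fps) $ 0 = 0" and f1: "f $ 1 \<noteq> 0"
    and e: "riordan g f u = y"
  shows "riordan_inv g f y = u"
  unfolding riordan_inv_def
proof (rule the_equality)
  show "riordan g f u = y" by (rule e)
  fix u' assume "riordan g f u' = y"
  with e g have "g * (u' oo f) = g * (u oo f)" by (simp add: riordan_def)
  with g have "u' oo f = u oo f" by simp
  thus "u' = u" by (rule comp_inj[OF f0 f1])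
qed

lemma sol_unique:
  fixes d e t :: "real fps"
  assumes d0: "d $ 0 = 0" and e0: "e $ 0 = 0" and d: "d = t + d^2" and e: "e = t + e^2"
  shows "d = e"
proof -
  have "(d - e) * (1 - (d + e)) = (d - t - d^2) - (e - t - e^2)"
    by (simp add: algebra_simps power2_eq_square)
  also have "\<dots> = 0"
  proof -
    have "d - t - d^2 = 0" using d by (metis add_diff_cancel_left' diff_self)
    moreover have "e - t - e^2 = 0" using e by (metis add_diff_cancel_left' diff_self)
    ultimately show ?thesis by simp
  qed
  finally have "(d - e) * (1 - (d + e)) = 0" .
  moreover have "1 - (d + e) \<noteq> 0"
  proof
    assume "1 - (d + e) = 0"
    hence "(1 - (d + e)) $ 0 = 0" by simp
    thus False using d0 e0 by simp
  qed
  ultimately show ?thesis by simp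
qed

definition cc :: "real fps" where "cc = fps_X * Cat"

lemma cc0: "cc $ 0 = 0" by (simp add: cc_def)

lemma cc_eq: "cc = fps_X + cc^2" unfolding cc_def by (rule c_eq)

lemma cc_nz: "cc \<noteq> 0"
proof
  assume "cc = 0" hence "fps_X = (0::real fps)" using cc_eq by simp
  thus False by simp
qed

definition tt :: "real fps" where "tt = (- fps_X) oo (fps_X * (1 + fps_X))"

lemma tt_eq: "tt = - (fps_X * (1 + fps_X))"
  unfolding tt_def by (simp add: fps_compose_uminus)

lemma tt0: "tt $ 0 = 0" by (simp add: tt_eq)

lemma cc_tt: "cc oo tt = - fps_X"
proof (rule sol_unique[where t = tt])
  show "(cc oo tt) $ 0 = 0" by (simp add: cc0)
  show "(- fps_X :: real fps) $ 0 = 0" by simp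
  have "cc oo tt = (fps_X + cc^2) oo tt" using cc_eq by simp
  also have "\<dots> = tt + (cc oo tt)^2"
    by (simp add: fps_compose_add_distrib fps_compose_power tt0)
  finally show "cc oo tt = tt + (cc oo tt)^2" .
  show "- fps_X = tt + (- fps_X)^2" by (simp add: tt_eq algebra_simps power2_eq_square)
qed

lemma f_props: "(fps_X * (1 + fps_X) :: real fps) $ 0 = 0" "(fps_X * (1 + fps_X) :: real fps) $ 1 \<noteq> 0"
  by (simp_all add: algebra_simps)

lemma Dop_Dop: "Dop (Dop u) = u"
proof -
  have "Dop (Dop u) = u oo (- fps_X) oo (- fps_X)" by (simp add: Dop_def riordan_def)
  also have "\<dots> = u oo ((- fps_X) oo (- fps_X))" by (rule fps_compose_assoc[symmetric]) simp_all
  also have "\<dots> = u" by (simp add: fps_compose_uminus)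
  finally show ?thesis .
qed

lemma FS_part: "Dop (FS_inv (Dop y)) = y oo cc"
proof -
  have "riordan 1 (fps_X * (1 + fps_X)) (Dop (y oo cc)) = Dop y"
  proof -
    have "Dop (y oo cc) oo (fps_X * (1 + fps_X)) = (y oo cc) oo tt"
      unfolding Dop_def riordan_def tt_def by (simp add: fps_compose_assoc f_props)
    also have "\<dots> = y oo (cc oo tt)" by (rule fps_compose_assoc[symmetric]) (simp_all add: tt0 cc0)
    also have "\<dots> = Dop y" by (simp add: cc_tt Dop_def riordan_def)
    finally show ?thesis by (simp add: riordan_def)
  qed
  hence "FS_inv (Dop y) = Dop (y oo cc)"
    unfolding FS_inv_def by (intro rinv f_props) simp_all
  thus ?thesis by (simp add: Dop_Dop)
qed

lemma LS_part: "(1 - 2 * cc) * Dop (LS_inv (Dop y)) = y oo cc"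
proof -
  define R where "R = (y oo cc) / (1 - 2 * cc)"
  have R: "(1 - 2 * cc) * R = y oo cc" unfolding R_def
    by (subst mult.commute, rule div_mult_cancel_fps) (simp add: cc0)
  have "riordan (1 + 2 * fps_X) (fps_X * (1 + fps_X)) (Dop R) = Dop y"
  proof -
    have "Dop R oo (fps_X * (1 + fps_X)) = R oo tt"
      unfolding Dop_def riordan_def tt_def by (simp add: fps_compose_assoc f_props)
    have "((1 - 2 * cc) * R) oo tt = ((1 - 2 * cc) oo tt) * (R oo tt)"
      by (rule fps_compose_mult_distrib[OF tt0])
    also have "(1 - 2 * cc) oo tt = 1 + 2 * fps_X"
      by (simp add: fps_compose_sub_distrib fps_compose_mult_distrib[OF tt0] cc_tt)
    finally have "(1 + 2 * fps_X) * (R oo tt) = (y oo cc) oo tt" using R by simp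
    also have "\<dots> = y oo (cc oo tt)" by (rule fps_compose_assoc[symmetric]) (simp_all add: tt0 cc0)
    also have "\<dots> = Dop y" by (simp add: cc_tt Dop_def riordan_def)
    finally show ?thesis using \<open>Dop R oo (fps_X * (1 + fps_X)) = R oo tt\<close>
      by (simp add: riordan_def)
  qed
  hence "LS_inv (Dop y) = Dop R"
    unfolding LS_inv_def
  proof (intro rinv f_props)
    show "1 + 2 * fps_X \<noteq> (0::real fps)"
    proof
      assume "1 + 2 * fps_X = (0::real fps)"
      hence "(1 + 2 * fps_X) $ 0 = (0::real)" by simp
      thus False by simp
    qed
  qed
  thus ?thesis using R by (simp add: Dop_Dop)
qed

lemma nz0: "(f::real fps) $ 0 \<noteq> 0 \<Longrightarrow> f \<noteq> 0" by auto

lemma comp_frac: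
  assumes "(b::real fps) $ 0 \<noteq> 0"
  shows "((a / b) oo cc) * (b oo cc) = a oo cc"
proof -
  have "((a / b) oo cc) * (b oo cc) = (a / b * b) oo cc"
    by (rule fps_compose_mult_distrib[OF cc0, symmetric])
  also have "a / b * b = a" using assms by (rule div_mult_cancel_fps)
  finally show ?thesis .
qed

theorem theorem4p3:
  fixes v :: "real fps"
  defines "w \<equiv> FF v" and "x \<equiv> LF v"
  defines "xC \<equiv> fps_X * Cat"
  shows "(fps_to_fls (2 - xC) / fps_to_fls xC * fps_to_fls (w oo xC)
           = fps_to_fls (Dop (FS_inv (Dop x))))
    \<and> (fps_to_fls (2 - xC) / fps_to_fls (xC - 2 * fps_X ^ 2 * Cat ^ 2) * fps_to_fls (w oo xC)
           = fps_to_fls (Dop (LS_inv (Dop x))))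
    \<and> (riordan (xC / (2 - xC)) xC x = Dop (FS_inv (Dop w)))
    \<and> (riordan (xC / ((1 - 2 * xC) * (2 - xC))) xC x = Dop (LS_inv (Dop w)))"
proof -
  have xCc: "xC = cc" by (simp add: xC_def cc_def)
  define h :: "real fps" where "h = fps_X ^ 2 / (1 - fps_X)"
  define P where "P = (v oo h) oo cc"
  define G1 where "G1 = (fps_X / (1 - fps_X)) oo cc"
  define G2 where "G2 = ((2 - fps_X) / (1 - fps_X)) oo cc"
  have G1: "G1 * (1 - cc) = cc"
    using comp_frac[of "1 - fps_X" fps_X] unfolding G1_def
    by (simp add: fps_compose_sub_distrib cc0)
  have G2: "G2 * (1 - cc) = 2 - cc"
    using comp_frac[of "1 - fps_X" "2 - fps_X"] unfolding G2_def
    by (simp add: fps_compose_sub_distrib cc0)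
  have wc: "w oo cc = G1 * P"
    unfolding w_def FF_def riordan_def G1_def P_def h_def
    by (rule fps_compose_mult_distrib[OF cc0])
  have xc: "x oo cc = G2 * P"
    unfolding x_def LF_def riordan_def G2_def P_def h_def
    by (rule fps_compose_mult_distrib[OF cc0])
  have n1: "1 - cc \<noteq> 0" by (rule nz0) (simp add: cc0)
  have n2: "2 - cc \<noteq> 0" by (rule nz0) (simp add: cc0)
  have n3: "1 - 2 * cc \<noteq> 0" by (rule nz0) (simp add: cc0)
  have key: "(2 - cc) * (w oo cc) = cc * (x oo cc)"
  proof -
    have "((2 - cc) * (w oo cc)) * (1 - cc) = (2 - cc) * (G1 * (1 - cc)) * P"
      by (simp add: wc ac_simps)
    also have "\<dots> = cc * (G2 * (1 - cc)) * P" by (simp add: G1 G2 ac_simps)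
    also have "\<dots> = (cc * (x oo cc)) * (1 - cc)" by (simp add: xc ac_simps)
    finally show ?thesis using n1 by simp
  qed
  have flsc: "fps_to_fls cc \<noteq> 0" using cc_nz by simp
  have A: "fps_to_fls (2 - cc) / fps_to_fls cc * fps_to_fls (w oo cc) = fps_to_fls (x oo cc)"
  proof -
    have "fps_to_fls (2 - cc) * fps_to_fls (w oo cc) = fps_to_fls cc * fps_to_fls (x oo cc)"
      by (simp only: fls_times_fps_to_fls[symmetric] key)
    thus ?thesis using flsc by (simp add: field_simps)
  qed
  define S where "S = Dop (LS_inv (Dop x))"
  have S: "(1 - 2 * cc) * S = x oo cc" unfolding S_def by (rule LS_part)
  have B: "fps_to_fls (2 - cc) / fps_to_fls (cc - 2 * fps_X ^ 2 * Cat ^ 2) * fps_to_fls (w oo cc)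
           = fps_to_fls S"
  proof -
    have den: "cc - 2 * fps_X ^ 2 * Cat ^ 2 = cc * (1 - 2 * cc)"
      by (simp add: cc_def power2_eq_square algebra_simps)
    have nd: "fps_to_fls (cc * (1 - 2 * cc)) \<noteq> 0" using cc_nz n3 by simp
    have "fps_to_fls (2 - cc) * fps_to_fls (w oo cc) = fps_to_fls (cc * (1 - 2 * cc)) * fps_to_fls S"
      by (simp only: fls_times_fps_to_fls[symmetric] key mult.assoc S)
    thus ?thesis unfolding den using nd by (simp add: field_simps)
  qed
  have C: "riordan (cc / (2 - cc)) cc x = w oo cc"
  proof -
    have q: "cc / (2 - cc) * (2 - cc) = cc" by (rule div_mult_cancel_fps) (simp add: cc0)
    have "riordan (cc / (2 - cc)) cc x * ((1 - cc) * (2 - cc))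
        = (cc / (2 - cc) * (2 - cc)) * (G2 * (1 - cc)) * P"
      by (simp add: riordan_def xc ac_simps)
    also have "\<dots> = (G1 * (1 - cc)) * (2 - cc) * P" by (simp only: q G1 G2)
    also have "\<dots> = (w oo cc) * ((1 - cc) * (2 - cc))" by (simp add: wc ac_simps)
    finally show ?thesis using n1 n2 by simp
  qed
  define S' where "S' = Dop (LS_inv (Dop w))"
  have S': "(1 - 2 * cc) * S' = w oo cc" unfolding S'_def by (rule LS_part)
  have D: "riordan (cc / ((1 - 2 * cc) * (2 - cc))) cc x = S'"
  proof -
    have q: "cc / ((1 - 2 * cc) * (2 - cc)) * ((1 - 2 * cc) * (2 - cc)) = cc"
      by (rule div_mult_cancel_fps) (simp add: cc0)
    have "riordan (cc / ((1 - 2 * cc) * (2 - cc))) cc x * ((1 - 2 * cc) * (1 - cc) * (2 - cc))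
        = (cc / ((1 - 2 * cc) * (2 - cc)) * ((1 - 2 * cc) * (2 - cc))) * (G2 * (1 - cc)) * P"
      by (simp add: riordan_def xc ac_simps)
    also have "\<dots> = (G1 * (1 - cc)) * (2 - cc) * P" by (simp only: q G1 G2)
    also have "\<dots> = ((1 - 2 * cc) * S') * ((1 - cc) * (2 - cc))" by (simp only: S' wc) (simp add: ac_simps)
    also have "\<dots> = S' * ((1 - 2 * cc) * (1 - cc) * (2 - cc))" by (simp add: ac_simps)
    finally show ?thesis using n1 n2 n3 by simp
  qed
  show ?thesis unfolding xCc
    using A B C D FS_part[of x] FS_part[of w] S_def S'_def by simp
qed

end
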